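(* Suppose a bijective real-linear map $T\colon M_2(\mathbb F)\to M_2(\mathbb F)$ satisfies $\|T(A)T(B)\|=\|T(A)\|\,\|T(B)\|$ whenever $\|AB\|=\|A\|\,\|B\|$. Then $T(\mathbb F I)=\mathbb F I$.
   Context: $\mathbb F$ is $\mathbb C$ or $\mathbb R$ and $\|\cdot\|$ is the spectral norm on $M_2(\mathbb F)$. *)

theory Defs
  imports "HOL-Analysis.Analysis"
begin

definition spec_norm :: "('a::real_normed_field)^2^2 \<Rightarrow> real" where
  "spec_norm A = onorm (\<lambda>x. A *v x)"

definition scalar_mats :: "(('a::real_normed_field)^2^2) set" where
  "scalar_mats = range (\<lambda>c. mat c)"

definition norm_mult_preserver :: "(('a::real_normed_field)^2^2 \<Rightarrow> 'a^2^2) \<Rightarrow> bool" where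
  "norm_mult_preserver T \<longleftrightarrow> bij T \<and> linear T \<and>
     (\<forall>A B. spec_norm (A ** B) = spec_norm A * spec_norm B \<longrightarrow>
            spec_norm (T A ** T B) = spec_norm (T A) * spec_norm (T B))"

end

theory Submission
  imports Defs
begin


type_synonym 'a m2 = "'a^2^2"

definition adj_rel :: "('a::{euclidean_space,real_normed_field})^2^2 \<Rightarrow> 'a^2^2 \<Rightarrow> bool" where
  "adj_rel A A' \<longleftrightarrow> (\<forall>v w. inner (A *v v) w = inner v (A' *v w))"

lemma attain:
  fixes A :: "('a::{euclidean_space,real_normed_field})^2^2"
  shows "\<exists>x. norm x = 1 \<and> norm (A *v x) = spec_norm A"
proof -
  have S: "compact (sphere (0::'a^2) 1)" "sphere (0::'a^2) 1 \<noteq> {}"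
    using compact_sphere apply blast
    using vector_choose_size[of 1] by fastforce
  have c: "continuous_on (sphere 0 1) (\<lambda>x. norm (A *v x))"
    by (intro continuous_on_norm linear_continuous_on) simp
  obtain x where x: "x \<in> sphere 0 1" "\<And>y. y \<in> sphere 0 1 \<Longrightarrow> norm (A *v y) \<le> norm (A *v x)"
    using continuous_attains_sup[OF S c] by blast
  have "onorm ((*v) A) \<le> norm (A *v x)"
  proof (rule onorm_le)
    fix y :: "'a^2"
    show "norm (A *v y) \<le> norm (A *v x) * norm y"
    proof (cases "y = 0")
      case True then show ?thesis by simp
    next
      case False
      have "norm (A *v (inverse (norm y) *\<^sub>R y)) \<le> norm (A *v x)"
        using x(2)[of "inverse (norm y) *\<^sub>R y"] False by simp
      moreover have "A *v (inverse (norm y) *\<^sub>R y) = inverse (norm y) *\<^sub>R (A *v y)"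
        by (simp add: linear_scale[OF linear_conv_bounded_linear[THEN iffD2, OF matrix_vector_mul_bounded_linear]])
      ultimately show ?thesis using False by (simp add: field_simps)
    qed
  qed
  moreover have "norm (A *v x) \<le> onorm ((*v) A) * norm x"
    by (rule onorm) simp
  ultimately show ?thesis using x(1) unfolding spec_norm_def by (intro exI[of _ x]) auto
qed

lemma quad_zero:
  fixes c d :: real
  assumes "\<And>t. 2*t*c + t^2*d \<le> 0"
  shows "c = 0"
proof (rule ccontr)
  assume c0: "c \<noteq> 0"
  define e where "e = \<bar>d\<bar> + 1"
  have e: "e > 0" "\<bar>d\<bar> < e" unfolding e_def by auto
  define t where "t = c / e"
  have cc: "c*c > 0" by (metis c0 not_real_square_gt_zero)
  have tc: "t * c > 0" unfolding t_def using cc e by simp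
  have "t^2 * \<bar>d\<bar> \<le> t^2 * e" using e by (simp add: mult_left_mono)
  also have "t^2 * e = t * c" unfolding t_def using e by (simp add: power2_eq_square)
  finally have "t^2 * \<bar>d\<bar> \<le> t * c" .
  moreover have "t^2*d \<ge> - (t^2 * \<bar>d\<bar>)" using mult_left_mono[of "-\<bar>d\<bar>" d "t^2"] by simp
  ultimately have "2*t*c + t^2*d > 0" using tc by linarith
  with assms[of t] show False by linarith
qed

lemma mv_scaleR: "(A::('a::{euclidean_space,real_normed_field})^2^2) *v (t *\<^sub>R w) = t *\<^sub>R (A *v w)"
  by (simp add: linear_scale[OF linear_conv_bounded_linear[THEN iffD2, OF matrix_vector_mul_bounded_linear]])

lemma mv_add: "(A::('a::{euclidean_space,real_normed_field})^2^2) *v (v + w) = A *v v + A *v w"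
  by (simp add: matrix_vector_right_distrib)

lemma mv_norm_le: "norm ((A::('a::{euclidean_space,real_normed_field})^2^2) *v x) \<le> spec_norm A * norm x"
  unfolding spec_norm_def by (rule onorm) simp

lemma spec_norm_nonneg: "spec_norm (A::('a::{euclidean_space,real_normed_field})^2^2) \<ge> 0"
  unfolding spec_norm_def by (rule onorm_pos_le) simp

lemma var:
  fixes A A' :: "('a::{euclidean_space,real_normed_field})^2^2"
  assumes adj: "adj_rel A A'" and z: "norm (A *v z) = spec_norm A * norm z"
  shows "A' *v (A *v z) = (spec_norm A)^2 *\<^sub>R z"
proof -
  define s where "s = spec_norm A"
  have s0: "s \<ge> 0" unfolding s_def by (rule spec_norm_nonneg)
  have key: "inner (A *v z) (A *v w) = s^2 * inner z w" for w
  proof -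
    let ?c = "inner (A *v z) (A *v w) - s^2 * inner z w"
    let ?d = "inner (A *v w) (A *v w) - s^2 * inner w w"
    have "2*t*?c + t^2*?d \<le> 0" for t
    proof -
      have "norm (A *v (z + t *\<^sub>R w)) \<le> s * norm (z + t *\<^sub>R w)"
        unfolding s_def by (rule mv_norm_le)
      hence "(norm (A *v (z + t *\<^sub>R w)))^2 \<le> (s * norm (z + t *\<^sub>R w))^2"
        by (rule power_mono) simp
      hence "inner (A *v z + t *\<^sub>R (A *v w)) (A *v z + t *\<^sub>R (A *v w)) \<le> s^2 * inner (z + t *\<^sub>R w) (z + t *\<^sub>R w)"
        by (simp add: power2_norm_eq_inner power_mult_distrib mv_add mv_scaleR)
      moreover have "inner (A *v z) (A *v z) = s^2 * inner z z"
        using z unfolding s_def[symmetric] by (simp add: power2_norm_eq_inner[symmetric] power_mult_distrib)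
      ultimately show ?thesis
        by (simp add: inner_add_left inner_add_right inner_commute[of w z] inner_commute[of "A *v w" "A *v z"] algebra_simps power2_eq_square)
    qed
    then show ?thesis using quad_zero[of ?c ?d] by simp
  qed
  have "inner w (A' *v (A *v z) - s^2 *\<^sub>R z) = 0" for w
  proof -
    have "inner w (A' *v (A *v z)) = inner (A *v w) (A *v z)"
      using adj unfolding adj_rel_def by simp
    also have "\<dots> = s^2 * inner z w" using key[of w] by (simp add: inner_commute)
    finally show ?thesis by (simp add: inner_diff_right inner_commute)
  qed
  from this[of "A' *v (A *v z) - s^2 *\<^sub>R z"] show ?thesis unfolding s_def by simp
qed



lemma mv2: "((A::('a::semiring_1)^2^2) *v x)$i = A$i$1 * x$1 + A$i$2 * x$2"
  by (simp add: matrix_vector_mult_def sum_2)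
lemma mm2: "((A::('a::semiring_1)^2^2) ** B)$i$j = A$i$1 * B$1$j + A$i$2 * B$2$j"
  by (simp add: matrix_matrix_mult_def sum_2)
lemma m2_eq: "(A::'a^2^2) = B \<longleftrightarrow> A$1$1 = B$1$1 \<and> A$1$2 = B$1$2 \<and> A$2$1 = B$2$1 \<and> A$2$2 = B$2$2"
  by (auto simp: vec_eq_iff forall_2)
lemma v2_eq: "(x::'a^2) = y \<longleftrightarrow> x$1 = y$1 \<and> x$2 = y$2"
  by (auto simp: vec_eq_iff forall_2)

locale cfield =
  fixes cj :: "'a::{euclidean_space,real_normed_field} \<Rightarrow> 'a"
  assumes cj_add: "cj (a + b) = cj a + cj b"
  and cj_mult: "cj (a * b) = cj a * cj b"
  and cj_cj: "cj (cj a) = a"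
  and cj_inner: "inner (a * b) c = inner b (cj a * c)"
  and cj_real: "cj a = a \<Longrightarrow> \<exists>r. a = of_real r"
  and cj_norm: "a * cj a = of_real ((norm a)^2)"
  and cj_of_real: "cj (of_real r) = of_real r"
begin

lemma cj_0[simp]: "cj 0 = 0" using cj_of_real[of 0] by simp
lemma cj_1[simp]: "cj 1 = 1" using cj_of_real[of 1] by simp
lemma cj_minus: "cj (- a) = - cj a"
proof -
  have "cj a + cj (-a) = 0" using cj_add[of a "-a"] by simp
  then show ?thesis by (metis neg_eq_iff_add_eq_0)
qed
lemma cj_diff: "cj (a - b) = cj a - cj b" using cj_add[of a "-b"] cj_minus[of b] by simp
lemma cj_scaleR: "cj (r *\<^sub>R a) = r *\<^sub>R cj a" by (simp add: scaleR_conv_of_real cj_mult cj_of_real)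

lemmas cj_simps = cj_add cj_mult cj_cj cj_minus cj_diff cj_scaleR cj_of_real

definition adjm :: "'a^2^2 \<Rightarrow> 'a^2^2" where "adjm A = (\<chi> i j. cj (A$j$i))"

lemma adjm_nth[simp]: "adjm A $ i $ j = cj (A$j$i)" by (simp add: adjm_def)

lemma adj_rel_adjm: "adj_rel A (adjm A)"
  unfolding adj_rel_def
  by (simp add: inner_vec_def sum_2 mv2 inner_add_left inner_add_right cj_inner)

lemma adjm_adjm[simp]: "adjm (adjm A) = A" by (simp add: m2_eq cj_cj)
lemma adjm_add: "adjm (A + B) = adjm A + adjm B" by (simp add: m2_eq cj_add)
lemma adjm_diff: "adjm (A - B) = adjm A - adjm B" by (simp add: m2_eq cj_diff)
lemma adjm_scaleR: "adjm (r *\<^sub>R A) = r *\<^sub>R adjm A" by (simp add: m2_eq cj_scaleR)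
lemma adjm_mult: "adjm (A ** B) = adjm B ** adjm A" by (simp add: m2_eq mm2 cj_add cj_mult mult.commute)
lemma adjm_mat: "adjm (mat c) = mat (cj c)" by (simp add: m2_eq mat_def)

end



lemma normal_sq:
  fixes A A' :: "('a::{euclidean_space,real_normed_field})^2^2"
  assumes adj: "adj_rel A A'" and nor: "A ** A' = A' ** A"
  shows "spec_norm (A ** A) = spec_norm A * spec_norm A"
proof (rule antisym)
  let ?s = "spec_norm A"
  show "spec_norm (A ** A) \<le> ?s * ?s"
    unfolding spec_norm_def
  proof (rule onorm_le)
    fix x
    have "norm ((A ** A) *v x) = norm (A *v (A *v x))" by (simp add: matrix_vector_mul_assoc)
    also have "\<dots> \<le> ?s * norm (A *v x)" by (rule mv_norm_le)
    also have "\<dots> \<le> ?s * (?s * norm x)" by (rule mult_left_mono[OF mv_norm_le spec_norm_nonneg])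
    finally show "norm ((A ** A) *v x) \<le> onorm ((*v) A) * onorm ((*v) A) * norm x"
      unfolding spec_norm_def by (simp add: mult.assoc)
  qed
next
  let ?s = "spec_norm A" and ?t = "spec_norm (A ** A)"
  have t0: "?t \<ge> 0" by (rule spec_norm_nonneg)
  have "norm (A *v x) \<le> sqrt ?t * norm x" for x
  proof -
    let ?y = "A *v x"
    have ny: "norm (A' *v ?y) = norm (A *v ?y)"
    proof -
      have "inner (A' *v ?y) (A' *v ?y) = inner (A *v (A' *v ?y)) ?y"
        using adj unfolding adj_rel_def by simp
      also have "\<dots> = inner ((A' ** A) *v ?y) ?y" by (metis matrix_vector_mul_assoc nor)
      also have "\<dots> = inner ?y (A' *v (A *v ?y))"
        by (simp only: matrix_vector_mul_assoc[symmetric] inner_commute)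
      also have "\<dots> = inner (A *v ?y) (A *v ?y)"
        using adj unfolding adj_rel_def by metis
      finally show ?thesis by (simp add: norm_eq_sqrt_inner)
    qed
    have "(norm ?y)^2 = inner x (A' *v ?y)"
      using adj unfolding adj_rel_def by (simp add: power2_norm_eq_inner)
    also have "\<dots> \<le> norm x * norm (A' *v ?y)" by (rule norm_cauchy_schwarz)
    also have "\<dots> = norm x * norm ((A ** A) *v x)" using ny by (simp add: matrix_vector_mul_assoc[symmetric])
    also have "\<dots> \<le> norm x * (?t * norm x)" by (rule mult_left_mono[OF mv_norm_le norm_ge_zero])
    also have "\<dots> = (sqrt ?t * norm x)^2" using t0 by (simp add: power2_eq_square power_mult_distrib)
    finally show ?thesis
      using t0 by (metis norm_ge_zero power2_le_imp_le real_sqrt_ge_zero mult_nonneg_nonneg)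
  qed
  hence "?s \<le> sqrt ?t" unfolding spec_norm_def by (intro onorm_le) auto
  hence "?s * ?s \<le> sqrt ?t * sqrt ?t" using t0 by (intro mult_mono spec_norm_nonneg) auto
  thus "?s * ?s \<le> ?t" using t0 by simp
qed

lemma indep2:
  fixes M :: "('a::field)^2^2"
  assumes "M *v x = c *s x" "M *v y = c *s y" "x$1 * y$2 - x$2 * y$1 \<noteq> 0"
  shows "M = mat c"
proof -
  let ?D = "x$1 * y$2 - x$2 * y$1"
  from assms(1,2) have e: "M$1$1 * x$1 + M$1$2 * x$2 = c * x$1" "M$2$1 * x$1 + M$2$2 * x$2 = c * x$2"
     "M$1$1 * y$1 + M$1$2 * y$2 = c * y$1" "M$2$1 * y$1 + M$2$2 * y$2 = c * y$2"
    by (auto simp: v2_eq mv2)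
  have "(M$1$1 - c) * ?D = 0"
  proof -
    have "(M$1$1 - c) * ?D = (M$1$1 * x$1 + M$1$2 * x$2 - c * x$1) * y$2 - (M$1$1 * y$1 + M$1$2 * y$2 - c * y$1) * x$2"
      by (simp add: algebra_simps)
    then show ?thesis using e by simp
  qed
  moreover have "M$1$2 * ?D = 0"
  proof -
    have "M$1$2 * ?D = (M$1$1 * y$1 + M$1$2 * y$2 - c * y$1) * x$1 - (M$1$1 * x$1 + M$1$2 * x$2 - c * x$1) * y$1"
      by (simp add: algebra_simps)
    then show ?thesis using e by simp
  qed
  moreover have "(M$2$2 - c) * ?D = 0"
  proof -
    have "(M$2$2 - c) * ?D = (M$2$1 * y$1 + M$2$2 * y$2 - c * y$2) * x$1 - (M$2$1 * x$1 + M$2$2 * x$2 - c * x$2) * y$1"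
      by (simp add: algebra_simps)
    then show ?thesis using e by simp
  qed
  moreover have "M$2$1 * ?D = 0"
  proof -
    have "M$2$1 * ?D = (M$2$1 * x$1 + M$2$2 * x$2 - c * x$2) * y$2 - (M$2$1 * y$1 + M$2$2 * y$2 - c * y$2) * x$2"
      by (simp add: algebra_simps)
    then show ?thesis using e by simp
  qed
  ultimately show ?thesis using assms(3) by (simp add: m2_eq mat_def)
qed

lemma dep2:
  fixes x y :: "('a::field)^2"
  assumes "x$1 * y$2 - x$2 * y$1 = 0" "x \<noteq> 0"
  shows "\<exists>l. y = l *s x"
proof (cases "x$1 = 0")
  case True
  then have "x$2 \<noteq> 0" using assms(2) by (auto simp: v2_eq)
  then show ?thesis using True assms(1)
    by (intro exI[of _ "y$2 / x$2"]) (auto simp: v2_eq field_simps)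
next
  case False
  then show ?thesis using assms(1)
    by (intro exI[of _ "y$1 / x$1"]) (auto simp: v2_eq field_simps)
qed



lemma scaleR_mat: "r *\<^sub>R mat (of_real q :: 'a::real_algebra_1) = mat (of_real (r*q))"
  by (simp add: vec_eq_iff mat_def) (simp add: scaleR_conv_of_real)

context cfield begin

lemma fin:
  assumes sa: "adjm C = C" and tr: "C$1$1 + C$2$2 = 0" and cx: "C *v x = 0" and x0: "x \<noteq> 0"
  shows "C = 0"
proof -
  have c11: "cj (C$1$1) = C$1$1" using sa by (simp add: m2_eq)
  then obtain r where r: "C$1$1 = of_real r" using cj_real by blast
  have c21: "C$2$1 = cj (C$1$2)" using sa by (simp add: m2_eq)
  have c22: "C$2$2 = - C$1$1" using tr by (metis add.commute eq_neg_iff_add_eq_0)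
  define p where "p = C$1$1"
  define q where "q = C$1$2"
  have e1: "p * x$1 + q * x$2 = 0" and e2: "cj q * x$1 - p * x$2 = 0"
    using cx c21 c22 by (auto simp: v2_eq mv2 p_def q_def)
  have k: "p * p + q * cj q = of_real (r^2 + (norm q)^2)"
    using r cj_norm[of q] by (simp add: p_def power2_eq_square)
  have "(p * p + q * cj q) * x$1 = p * (p * x$1 + q * x$2) + q * (cj q * x$1 - p * x$2)"
    by (simp add: algebra_simps)
  hence a1: "(p * p + q * cj q) * x$1 = 0" using e1 e2 by simp
  have "(p * p + q * cj q) * x$2 = cj q * (p * x$1 + q * x$2) - p * (cj q * x$1 - p * x$2)"
    by (simp add: algebra_simps)
  hence a2: "(p * p + q * cj q) * x$2 = 0" using e1 e2 by simp
  have "p * p + q * cj q = 0" using a1 a2 x0 by (auto simp: v2_eq)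
  hence "(of_real (r^2 + (norm q)^2) :: 'a) = 0" using k by metis
  hence "r^2 + (norm q)^2 = 0" by (simp only: of_real_eq_0_iff)
  hence "r = 0" "q = 0" by (auto simp: add_nonneg_eq_0_iff)
  thus ?thesis using r c21 c22 by (simp add: m2_eq p_def q_def)
qed

lemma sq_normal:
  assumes h: "spec_norm (B ** B) = spec_norm B * spec_norm B"
  shows "B ** adjm B = adjm B ** B"
proof (cases "spec_norm B = 0")
  case True
  then have "\<forall>x. B *v x = 0" unfolding spec_norm_def using onorm_eq_0[of "(*v) B"] by simp
  then have "B = 0" by (simp add: matrix_eq)
  then show ?thesis by simp
next
  case False
  define s where "s = spec_norm B"
  have s0: "s > 0" using False spec_norm_nonneg[of B] unfolding s_def by simp
  obtain x where x1: "norm x = 1" and xa: "norm ((B ** B) *v x) = spec_norm (B ** B)"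
    using attain by blast
  define y where "y = B *v x"
  have By: "norm (B *v y) = s * s" using xa h unfolding y_def s_def by (simp add: matrix_vector_mul_assoc)
  have "s * s \<le> s * norm y" using By mv_norm_le[of B y] unfolding s_def by simp
  moreover have "norm y \<le> s" using mv_norm_le[of B x] x1 unfolding y_def s_def by simp
  ultimately have ny: "norm y = s" using s0 by (smt (verit) mult_le_cancel_left_pos)
  have v1: "adjm B *v (B *v x) = s^2 *\<^sub>R x"
    using var[OF adj_rel_adjm, of B x] ny x1 unfolding y_def s_def by simp
  have v2: "adjm B *v (B *v y) = s^2 *\<^sub>R y"
    using var[OF adj_rel_adjm, of B y] ny By unfolding s_def by simp
  have x0: "x \<noteq> 0" using x1 by auto
  have sR: "s^2 *\<^sub>R v = (of_real (s^2) :: 'a) *s v" for v :: "'a^2"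
  proof (rule vec_eq_iff[THEN iffD2], rule allI)
    fix i show "(s^2 *\<^sub>R v)$i = ((of_real (s^2) :: 'a) *s v)$i"
      by (simp only: vector_scaleR_component vector_scalar_mult_def vec_lambda_beta) (rule scaleR_conv_of_real)
  qed
  show ?thesis
  proof (cases "x$1 * y$2 - x$2 * y$1 = 0")
    case False
    have a1: "(adjm B ** B) *v x = (of_real (s^2) :: 'a) *s x" by (metis v1 sR matrix_vector_mul_assoc)
    have a2: "(adjm B ** B) *v y = (of_real (s^2) :: 'a) *s y" by (metis v2 sR matrix_vector_mul_assoc)
    have "adjm B ** B = mat (of_real (s^2))"
      by (rule indep2[OF a1 a2 False])
    note bb = this
    have m1: "inverse (s^2) *\<^sub>R (mat (of_real (s^2)) :: 'a^2^2) = mat 1"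
      using scaleR_mat[of "inverse (s^2)" "s^2"] s0 by simp
    have m2: "s^2 *\<^sub>R (mat 1 :: 'a^2^2) = mat (of_real (s^2))"
      using scaleR_mat[of "s^2" 1] by simp
    have "(inverse (s^2) *\<^sub>R adjm B) ** B = mat 1"
      by (simp only: scalar_matrix_assoc[symmetric] bb m1)
    hence i1: "B ** (inverse (s^2) *\<^sub>R adjm B) = mat 1" by (simp add: matrix_left_right_inverse)
    have "B ** adjm B = s^2 *\<^sub>R (B ** (inverse (s^2) *\<^sub>R adjm B))"
    proof -
      have "B ** (inverse (s^2) *\<^sub>R adjm B) = inverse (s^2) *\<^sub>R (B ** adjm B)"
        by (metis matrix_scalar_ac scalar_matrix_assoc)
      then show ?thesis using s0 by simp
    qed
    also have "\<dots> = mat (of_real (s^2))" by (simp only: i1 m2)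
    finally have "B ** adjm B = mat (of_real (s^2))" .
    then show ?thesis using \<open>adjm B ** B = _\<close> by simp
  next
    case True
    obtain l where l: "y = l *s x" using dep2[OF True x0] by blast
    have "l \<noteq> 0" using l ny s0 by auto
    have "l *s (adjm B *v x) = of_real (s^2) *s x"
      using v1 l unfolding y_def by (simp add: vector_scalar_commute sR)
    hence bx: "adjm B *v x = (of_real (s^2) / l) *s x"
      using \<open>l \<noteq> 0\<close> by (simp add: vec_eq_iff field_simps)
    define C where "C = B ** adjm B - adjm B ** B"
    have "C *v x = B *v (adjm B *v x) - adjm B *v (B *v x)"
      unfolding C_def by (simp add: matrix_vector_mult_diff_rdistrib matrix_vector_mul_assoc)
    also have "\<dots> = 0"
    proof -
      have "B *v (adjm B *v x) = (of_real (s^2) / l) *s y" by (simp add: bx vector_scalar_commute y_def)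
      also have "\<dots> = (of_real (s^2)::'a) *s x" using l \<open>l \<noteq> 0\<close> by (simp add: vec_eq_iff)
      finally have t1: "B *v (adjm B *v x) = (of_real (s^2)::'a) *s x" .
      have t2: "adjm B *v (B *v x) = (of_real (s^2)::'a) *s x" using v1 sR by metis
      show ?thesis using t1 t2 by simp
    qed
    finally have cx: "C *v x = 0" .
    have "adjm C = C" unfolding C_def by (simp add: adjm_diff adjm_mult)
    moreover have "C$1$1 + C$2$2 = 0" unfolding C_def by (simp add: mm2 algebra_simps)
    ultimately have "C = 0" using fin cx x0 by blast
    then show ?thesis unfolding C_def by simp
  qed
qed

end



context cfield begin

definition Phi :: "'a^2^2 \<Rightarrow> 'a^2^2 \<Rightarrow> 'a^2^2" where
  "Phi X Z = X ** adjm Z + Z ** adjm X - adjm X ** Z - adjm Z ** X"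

definition Nm :: "'a^2^2 \<Rightarrow> 'a^2^2" where
  "Nm W = W ** adjm W - adjm W ** W"

lemma Phi_from_N: "Phi X Z + Phi X Z = Nm (X + Z) - Nm (X - Z)"
  by (simp add: Phi_def Nm_def m2_eq mm2 cj_add cj_diff algebra_simps)

lemma Phi_add: "Phi X (Z1 + Z2) = Phi X Z1 + Phi X Z2"
  by (simp add: Phi_def m2_eq mm2 cj_add algebra_simps)

lemma pert_normal:
  assumes "adjm A = A \<or> adjm A = - A"
  shows "Nm (mat c + A) = 0" "Nm (mat c - A) = 0"
proof -
  from assms show "Nm (mat c + A) = 0"
  proof
    assume h: "adjm A = A"
    have a: "adjm (mat c + A) = mat (cj c) + A" by (simp add: adjm_add adjm_mat h)
    show ?thesis unfolding Nm_def a by (simp add: m2_eq mm2 mat_def algebra_simps)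
  next
    assume h: "adjm A = - A"
    have a: "adjm (mat c + A) = mat (cj c) - A" by (simp add: adjm_add adjm_mat h)
    show ?thesis unfolding Nm_def a by (simp add: m2_eq mm2 mat_def algebra_simps)
  qed
  from assms show "Nm (mat c - A) = 0"
  proof
    assume h: "adjm A = A"
    have a: "adjm (mat c - A) = mat (cj c) - A" by (simp add: adjm_diff adjm_mat h)
    show ?thesis unfolding Nm_def a by (simp add: m2_eq mm2 mat_def algebra_simps)
  next
    assume h: "adjm A = - A"
    have a: "adjm (mat c - A) = mat (cj c) + A" by (simp add: adjm_diff adjm_mat h)
    show ?thesis unfolding Nm_def a by (simp add: m2_eq mm2 mat_def algebra_simps)
  qed
qed

lemma normal_Nm: "spec_norm (B ** B) = spec_norm B * spec_norm B \<Longrightarrow> Nm B = 0"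
  using sq_normal unfolding Nm_def by simp

lemma Nm_normal: "Nm B = 0 \<Longrightarrow> spec_norm (B ** B) = spec_norm B * spec_norm B"
  using normal_sq[OF adj_rel_adjm] unfolding Nm_def by simp

lemma key:
  fixes T :: "'a^2^2 \<Rightarrow> 'a^2^2"
  assumes bij: "bij T" and lin: "linear T"
  and pres: "\<forall>A B. spec_norm (A ** B) = spec_norm A * spec_norm B \<longrightarrow>
            spec_norm (T A ** T B) = spec_norm (T A) * spec_norm (T B)"
  shows "Phi (T (mat c)) M = 0"
proof -
  let ?X = "T (mat c)"
  have P0: "Phi ?X (T A) = 0" if hA: "adjm A = A \<or> adjm A = - A" for A
  proof -
    have "Nm (T (mat c + A)) = 0"
      using pres Nm_normal[OF pert_normal(1)[OF hA]] normal_Nm by blast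
    moreover have "Nm (T (mat c - A)) = 0"
      using pres Nm_normal[OF pert_normal(2)[OF hA]] normal_Nm by blast
    ultimately have "Nm (?X + T A) = 0" "Nm (?X - T A) = 0"
      using linear_add[OF lin] linear_diff[OF lin] by auto
    hence "Phi ?X (T A) + Phi ?X (T A) = 0" using Phi_from_N by simp
    hence "2 *\<^sub>R Phi ?X (T A) = 0" by (simp add: scaleR_2)
    thus ?thesis by simp
  qed
  obtain A where A: "M = T A" using bij by (metis bij_pointE)
  define H where "H = (1/2::real) *\<^sub>R (A + adjm A)"
  define S where "S = (1/2::real) *\<^sub>R (A - adjm A)"
  have "adjm H = H" unfolding H_def by (simp add: adjm_scaleR adjm_add add.commute)
  moreover have "adjm S = - S" unfolding S_def by (simp add: adjm_scaleR adjm_diff scaleR_diff_right)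
  moreover have "A = H + S" unfolding H_def S_def by (simp add: scaleR_add_right scaleR_diff_right algebra_simps scaleR_add_left[symmetric])
  ultimately have "M = T H + T S" and "Phi ?X (T H) = 0" and "Phi ?X (T S) = 0"
    using A P0 linear_add[OF lin] by auto
  then show ?thesis by (simp add: Phi_add)
qed

end



interpretation R: cfield "\<lambda>x::real. x"
  by unfold_locales (auto simp: inner_real_def power2_eq_square[symmetric])

declare R.cj_0[simp del] R.cj_1[simp del]

interpretation C: cfield "cnj"
proof unfold_locales
  fix a b c :: complex
  show "inner (a * b) c = inner b (cnj a * c)" by (simp add: inner_complex_def algebra_simps)
  show "cnj a = a \<Longrightarrow> \<exists>r. a = of_real r" by (metis Reals_cases Reals_cnj_iff)
  show "a * cnj a = of_real ((norm a)^2)" by (rule complex_norm_square[symmetric])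
qed auto

definition E12 :: "('a::zero_neq_one)^2^2" where "E12 = (\<chi> i j. if i = 1 \<and> j = 2 then 1 else 0)"
definition E21 :: "('a::zero_neq_one)^2^2" where "E21 = (\<chi> i j. if i = 2 \<and> j = 1 then 1 else 0)"

lemma E12_nth[simp]: "E12$1$1 = 0" "E12$1$2 = 1" "E12$2$1 = 0" "E12$2$2 = 0" by (simp_all add: E12_def)
lemma E21_nth[simp]: "E21$1$1 = 0" "E21$1$2 = 0" "E21$2$1 = 1" "E21$2$2 = 0" by (simp_all add: E21_def)

lemma real_scalar:
  fixes X :: "real^2^2"
  assumes "R.Phi X E12 = 0" "R.Phi X E21 = 0"
  shows "X = mat (X$1$1)"
proof -
  have r1: "(R.Phi Y E12)$1$1 = Y$1$2 + Y$1$2" for Y :: "real^2^2"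
    by (simp only: R.Phi_def mm2 R.adjm_nth E12_nth E21_nth vector_minus_component vector_add_component)
  have r2: "(R.Phi Y E12)$2$1 = Y$2$2 - Y$1$1" for Y :: "real^2^2"
    by (simp only: R.Phi_def mm2 R.adjm_nth E12_nth E21_nth vector_minus_component vector_add_component)
  have r3: "(R.Phi Y E21)$1$1 = - (Y$2$1 + Y$2$1)" for Y :: "real^2^2"
    by (simp only: R.Phi_def mm2 R.adjm_nth E12_nth E21_nth vector_minus_component vector_add_component)
  have z1: "(R.Phi X E12)$1$1 = 0" "(R.Phi X E12)$2$1 = 0" "(R.Phi X E21)$1$1 = 0"
    using assms by simp_all
  have "X$1$2 + X$1$2 = 0" using z1(1) by (simp only: r1)
  hence "X$1$2 = 0" by simp
  moreover have "X$2$2 - X$1$1 = 0" using z1(2) by (simp only: r2)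
  hence "X$2$2 = X$1$1" by simp
  moreover have "- (X$2$1 + X$2$1) = 0" using z1(3) by (simp only: r3)
  hence "X$2$1 = 0" by simp
  ultimately show ?thesis by (simp add: m2_eq mat_def)
qed

lemma real_part:
  fixes T :: "real^2^2 \<Rightarrow> real^2^2"
  assumes "norm_mult_preserver T"
  shows "T ` scalar_mats = scalar_mats"
proof -
  have bij: "bij T" and lin: "linear T"
   and pres: "\<forall>A B. spec_norm (A ** B) = spec_norm A * spec_norm B \<longrightarrow>
            spec_norm (T A ** T B) = spec_norm (T A) * spec_norm (T B)"
    using assms unfolding norm_mult_preserver_def by auto
  define a where "a = T (mat 1) $ 1 $ 1"
  have X: "T (mat 1) = mat a" unfolding a_def
    by (rule real_scalar; rule R.key[OF bij lin pres])
  have Tc: "T (mat c) = mat (c * a)" for c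
  proof -
    have "mat c = c *\<^sub>R (mat 1 :: real^2^2)" by (simp add: m2_eq mat_def)
    hence "T (mat c) = c *\<^sub>R mat a" using X linear_scale[OF lin] by simp
    thus ?thesis by (simp add: m2_eq mat_def)
  qed
  have "a \<noteq> 0"
  proof
    assume "a = 0"
    hence "T (mat 1) = T 0" using X linear_0[OF lin] by simp
    hence "(mat 1 :: real^2^2) = 0" using bij by (simp add: bij_def inj_eq)
    thus False by (simp add: m2_eq mat_def)
  qed
  show ?thesis unfolding scalar_mats_def
  proof
    show "T ` range mat \<subseteq> range mat" using Tc by auto
    show "range mat \<subseteq> T ` range mat"
    proof
      fix M :: "real^2^2" assume "M \<in> range mat"
      then obtain d where "M = mat d" by auto
      hence "M = T (mat (d / a))" using Tc \<open>a \<noteq> 0\<close> by simp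
      thus "M \<in> T ` range mat" by auto
    qed
  qed
qed

definition EA :: "complex \<Rightarrow> complex^2^2" where "EA c = (\<chi> i j. if i = 1 \<and> j = 2 then c else 0)"
definition EB :: "complex \<Rightarrow> complex^2^2" where "EB c = (\<chi> i j. if i = 2 \<and> j = 1 then c else 0)"

lemma EA_nth[simp]: "EA c$1$1 = 0" "EA c$1$2 = c" "EA c$2$1 = 0" "EA c$2$2 = 0" by (simp_all add: EA_def)
lemma EB_nth[simp]: "EB c$1$1 = 0" "EB c$1$2 = 0" "EB c$2$1 = c" "EB c$2$2 = 0" by (simp_all add: EB_def)

lemma t1: "(C.Phi X (EA c))$1$1 = X$1$2 * cnj c + c * cnj (X$1$2)"
  by (simp add: C.Phi_def mm2)
lemma t2: "(C.Phi X (EA c))$2$1 = X$2$2 * cnj c - cnj c * X$1$1"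
  by (simp add: C.Phi_def mm2)
lemma t3: "(C.Phi X (EB c))$1$1 = - (c * cnj (X$2$1) + X$2$1 * cnj c)"
  by (simp add: C.Phi_def mm2)

lemma complex_scalar:
  fixes X :: "complex^2^2"
  assumes "C.Phi X (EA 1) = 0" "C.Phi X (EA \<i>) = 0" "C.Phi X (EB 1) = 0" "C.Phi X (EB \<i>) = 0"
  shows "X = mat (X$1$1)"
proof -
  have z: "(C.Phi X (EA 1))$1$1 = 0" "(C.Phi X (EA \<i>))$1$1 = 0" "(C.Phi X (EB 1))$1$1 = 0"
    "(C.Phi X (EB \<i>))$1$1 = 0" "(C.Phi X (EA 1))$2$1 = 0"
    using assms by simp_all
  have a1: "X$1$2 * cnj 1 + 1 * cnj (X$1$2) = 0" using z(1) by (simp only: t1)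
  have a2: "X$1$2 * cnj \<i> + \<i> * cnj (X$1$2) = 0" using z(2) by (simp only: t1)
  have a3: "- (1 * cnj (X$2$1) + X$2$1 * cnj 1) = 0" using z(3) by (simp only: t3)
  have a4: "- (\<i> * cnj (X$2$1) + X$2$1 * cnj \<i>) = 0" using z(4) by (simp only: t3)
  have a5: "X$2$2 * cnj 1 - cnj 1 * X$1$1 = 0" using z(5) by (simp only: t2)
  have "X$1$2 = 0" using a1 a2 by (simp add: complex_eq_iff)
  moreover have "X$2$1 = 0" using a3 a4 by (simp add: complex_eq_iff)
  moreover have "X$2$2 = X$1$1" using a5 by simp
  ultimately show ?thesis by (simp add: m2_eq mat_def)
qed

lemma complex_part:
  fixes T :: "complex^2^2 \<Rightarrow> complex^2^2"
  assumes "norm_mult_preserver T"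
  shows "T ` scalar_mats = scalar_mats"
proof -
  have bij: "bij T" and lin: "linear T"
   and pres: "\<forall>A B. spec_norm (A ** B) = spec_norm A * spec_norm B \<longrightarrow>
            spec_norm (T A ** T B) = spec_norm (T A) * spec_norm (T B)"
    using assms unfolding norm_mult_preserver_def by auto
  define a where "a = T (mat 1) $ 1 $ 1"
  define b where "b = T (mat \<i>) $ 1 $ 1"
  have Xa: "T (mat 1) = mat a" unfolding a_def
    by (rule complex_scalar; rule C.key[OF bij lin pres])
  have Xb: "T (mat \<i>) = mat b" unfolding b_def
    by (rule complex_scalar; rule C.key[OF bij lin pres])
  have Tc: "T (mat c) = mat (of_real (Re c) * a + of_real (Im c) * b)" for c
  proof -
    have "mat c = Re c *\<^sub>R (mat 1 :: complex^2^2) + Im c *\<^sub>R mat \<i>"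
      by (simp add: m2_eq mat_def complex_eq_iff)
    hence "T (mat c) = Re c *\<^sub>R mat a + Im c *\<^sub>R mat b"
      using Xa Xb linear_scale[OF lin] linear_add[OF lin] by simp
    moreover have "Re c *\<^sub>R (mat a :: complex^2^2) + Im c *\<^sub>R mat b = mat (of_real (Re c) * a + of_real (Im c) * b)"
      by (simp add: m2_eq mat_def) (simp add: scaleR_conv_of_real)
    ultimately show ?thesis by simp
  qed
  have ind: "r = 0 \<and> s = 0" if h: "of_real r * a + of_real s * b = 0" for r s
  proof -
    have "T (mat (Complex r s)) = T 0" using Tc[of "Complex r s"] h linear_0[OF lin] by simp
    hence "(mat (Complex r s) :: complex^2^2) = 0" using bij by (simp add: bij_def inj_eq)
    hence "Complex r s = 0" by (simp add: m2_eq mat_def)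
    thus ?thesis by (simp add: complex_eq_iff)
  qed
  define D where "D = Re a * Im b - Im a * Re b"
  have "D \<noteq> 0"
  proof
    assume D0: "D = 0"
    have "of_real (Re b) * a + of_real (- Re a) * b = 0" using D0 unfolding D_def
      by (simp add: complex_eq_iff algebra_simps)
    hence 1: "Re b = 0 \<and> Re a = 0" using ind by fastforce
    have "of_real (Im b) * a + of_real (- Im a) * b = 0" using D0 unfolding D_def
      by (simp add: complex_eq_iff algebra_simps)
    hence 2: "Im b = 0 \<and> Im a = 0" using ind by fastforce
    have "a = 0" using 1 2 by (simp add: complex_eq_iff)
    hence "of_real 1 * a + of_real 0 * b = 0" by simp
    thus False using ind by fastforce
  qed
  show ?thesis unfolding scalar_mats_def
  proof
    show "T ` range mat \<subseteq> range mat" using Tc by auto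
    show "range mat \<subseteq> T ` range mat"
    proof
      fix M :: "complex^2^2" assume "M \<in> range mat"
      then obtain d where d: "M = mat d" by auto
      define r where "r = (Re d * Im b - Im d * Re b) / D"
      define s where "s = (Re a * Im d - Im a * Re d) / D"
      have e1: "(Re d * Im b - Im d * Re b) * Re a + (Re a * Im d - Im a * Re d) * Re b = Re d * D"
        unfolding D_def by (simp add: algebra_simps)
      have e2: "(Re d * Im b - Im d * Re b) * Im a + (Re a * Im d - Im a * Re d) * Im b = Im d * D"
        unfolding D_def by (simp add: algebra_simps)
      have "r * Re a + s * Re b = ((Re d * Im b - Im d * Re b) * Re a + (Re a * Im d - Im a * Re d) * Re b) / D"
        unfolding r_def s_def by (simp add: add_divide_distrib)
      also have "\<dots> = Re d" using e1 \<open>D \<noteq> 0\<close> by simp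
      finally have f1: "r * Re a + s * Re b = Re d" .
      have "r * Im a + s * Im b = ((Re d * Im b - Im d * Re b) * Im a + (Re a * Im d - Im a * Re d) * Im b) / D"
        unfolding r_def s_def by (simp add: add_divide_distrib)
      also have "\<dots> = Im d" using e2 \<open>D \<noteq> 0\<close> by simp
      finally have f2: "r * Im a + s * Im b = Im d" .
      have "of_real r * a + of_real s * b = d"
        using f1 f2 by (simp add: complex_eq_iff)
      hence "M = T (mat (Complex r s))" using Tc d by simp
      thus "M \<in> T ` range mat" by auto
    qed
  qed
qed

theorem mainTheorem11:
  shows "(\<forall>T :: real^2^2 \<Rightarrow> real^2^2. norm_mult_preserver T \<longrightarrow> T ` scalar_mats = scalar_mats)
       \<and> (\<forall>T :: complex^2^2 \<Rightarrow> complex^2^2. norm_mult_preserver T \<longrightarrow> T ` scalar_mats = scalar_mats)"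
  using real_part complex_part by blast

end
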